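(* Let $\alpha\in(0,1)$, $f>0$, $\varpi>0$, $R>0$. There exist a threshold $p^*\in(0,1)$ and a smooth function $\hat I:[p^*,1)\to(0,+\infty)$ such that: (1) for every $p\in(0,p^* )$, $U_0(p)\ge\sup_{I\ge0}U(p,I)$ (not insuring is optimal); (2) for $p=p^*$, $U_0(p^* )=\max_{I\ge0}U(p^*,I)=U(p^*,\hat I(p^* ))$ with $\hat I(p^* )>0$ (indifference between not insuring and insuring at indemnity $\hat I(p^* )$); (3) for every $p\in(p^*,1)$, $\max_{I\ge0}U(p,I)=U(p,\hat I(p))>U_0(p)$ with $\hat I(p)>0$ (insuring at indemnity $\hat I(p)$ is optimal).
   Context: Insurance model: a good of value $\varpi$ may be totally lost. The premium for indemnity $I$ is $P(I)=\alpha I+f$. The utility is $u(w)=1-e^{-Rw}$. For a probability of loss $p\in(0,1)$, the expected utility of not insuring is $U_0(p)=(1-p)u(\varpi)+p\,u(0)=(1-p)(1-e^{-R\varpi})$, and the expected utility of insuring with indemnity $I$ is $U(p,I)=(1-p)u(\varpi-P(I))+p\,u(I-P(I))=1-p e^{-R(I-P(I))}-(1-p)e^{-R(\varpi-P(I))}$. *)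

theory Defs
  imports "HOL-Analysis.Analysis"
begin

definition util :: "real \<Rightarrow> real \<Rightarrow> real" where
  "util R w = 1 - exp (- R * w)"

definition premium :: "real \<Rightarrow> real \<Rightarrow> real \<Rightarrow> real" where
  "premium \<alpha> f I = \<alpha> * I + f"

definition U0 :: "real \<Rightarrow> real \<Rightarrow> real \<Rightarrow> real" where
  "U0 R W p = (1 - p) * util R W + p * util R 0"

definition U :: "real \<Rightarrow> real \<Rightarrow> real \<Rightarrow> real \<Rightarrow> real \<Rightarrow> real \<Rightarrow> real" where
  "U \<alpha> f R W p I =
     (1 - p) * util R (W - premium \<alpha> f I) + p * util R (I - premium \<alpha> f I)"

definition smooth_on :: "real set \<Rightarrow> (real \<Rightarrow> real) \<Rightarrow> bool" where
  "smooth_on S g \<longleftrightarrow> (\<exists>D :: nat \<Rightarrow> real \<Rightarrow> real.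
      (\<forall>x\<in>S. D 0 x = g x) \<and>
      (\<forall>n. \<forall>x\<in>S. (D n has_real_derivative D (Suc n) x) (at x within S)))"

end

theory Submission
  imports Defs
begin

lemma d_inv_pow: "x \<noteq> 0 \<Longrightarrow> ((\<lambda>x::real. 1/x^(Suc n)) has_real_derivative -(real (Suc n))/x^(Suc (Suc n))) (at x)"
proof -
  assume x: "x \<noteq> 0"
  have d: "((\<lambda>x::real. 1/x^(Suc n)) has_real_derivative (0 * x^(Suc n) - (real (Suc n) * x^n) * 1)/ ((x^Suc n)^Suc (Suc 0))) (at x)"
    apply (rule DERIV_quotient[where f="\<lambda>_. 1" and g="\<lambda>x. x^Suc n"])
      apply (rule DERIV_const)
     apply (rule DERIV_cong[OF DERIV_pow]) apply simp
    using x apply simp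
    done
  have e: "(x^Suc n)^Suc (Suc 0) = x^n * x^(Suc (Suc n))"
    by (simp add: power_add[symmetric] power_mult[symmetric] algebra_simps)
  have "(0 * x^(Suc n) - (real (Suc n) * x^n) * 1)/ ((x^Suc n)^Suc (Suc 0)) = -(real (Suc n))/x^(Suc (Suc n))"
    unfolding e using x by (cases n) (simp_all add: field_simps)
  thus ?thesis using d by simp
qed

lemma aux_eq1: "(y::real) \<noteq> 0 \<Longrightarrow> (0 * y^(Suc n) - (real (Suc n) * (-1 * y^n)) * 1)/(y^n * y^(Suc (Suc n))) = real (Suc n)/y^(Suc (Suc n))"
  by (simp add: field_simps)

lemma d_inv_pow1: "x \<noteq> 1 \<Longrightarrow> ((\<lambda>x::real. 1/(1-x)^(Suc n)) has_real_derivative (real (Suc n))/(1-x)^(Suc (Suc n))) (at x)"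
proof -
  assume x: "x \<noteq> 1"
  have g: "((\<lambda>x::real. 1 - x) has_real_derivative -1) (at x)"
    by (auto intro!: derivative_eq_intros)
  have d: "((\<lambda>x::real. 1/(1-x)^(Suc n)) has_real_derivative (0 * (1-x)^(Suc n) - (real (Suc n) * (-1 * (1-x)^n)) * 1)/ (((1-x)^Suc n)^Suc (Suc 0))) (at x)"
    apply (rule DERIV_quotient[where f="\<lambda>_. 1" and g="\<lambda>x. (1-x)^Suc n"])
      apply (rule DERIV_const)
     apply (rule DERIV_cong[OF DERIV_power[OF g]]) apply simp
    using x apply simp
    done
  have e: "((1-x)^Suc n)^Suc (Suc 0) = (1-x)^n * (1-x)^(Suc (Suc n))"
    by (simp add: power_add[symmetric] power_mult[symmetric] algebra_simps)
  have "(0 * (1-x)^(Suc n) - (real (Suc n) * (-1 * (1-x)^n)) * 1)/ (((1-x)^Suc n)^Suc (Suc 0)) = (real (Suc n))/(1-x)^(Suc (Suc n))"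
    unfolding e using x aux_eq1[of "1-x" n] by simp
  thus ?thesis using d by simp
qed

lemma smooth_Ihat:
  fixes C R a :: real
  assumes "0 < a" "0 < R"
  shows "smooth_on {a..<1} (\<lambda>p. (C + ln p - ln (1-p))/R)"
  unfolding smooth_on_def
proof (intro exI conjI ballI allI)
  define D where "D = (\<lambda>n (x::real). case n of 0 \<Rightarrow> (C + ln x - ln (1-x))/R
     | Suc m \<Rightarrow> fact m * ((-1)^m / x^(Suc m) + 1/(1-x)^(Suc m)) / R)"
  fix x assume "x \<in> {a..<1}"
  thus "D 0 x = (C + ln x - ln (1-x))/R" unfolding D_def by simp
next
  define D where "D = (\<lambda>n (x::real). case n of 0 \<Rightarrow> (C + ln x - ln (1-x))/R
     | Suc m \<Rightarrow> fact m * ((-1)^m / x^(Suc m) + 1/(1-x)^(Suc m)) / R)"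
  fix n x assume x: "x \<in> {a..<1}"
  hence x0: "x > 0" "x < 1" using assms by auto
  have "(D n has_real_derivative D (Suc n) x) (at x)"
  proof (cases n)
    case 0
    have "((\<lambda>x. (C + ln x - ln (1-x))/R) has_real_derivative (1/x + 1/(1-x))/R) (at x)"
      using x0 assms by (auto intro!: derivative_eq_intros simp: field_simps)
    thus ?thesis unfolding D_def 0 by simp
  next
    case (Suc m)
    have der: "((\<lambda>x. fact m * ((-1)^m * (1/x^(Suc m)) + 1/(1-x)^(Suc m)) / R) has_real_derivative
       fact m * ((-1)^m * (-(real (Suc m))/x^(Suc (Suc m))) + (real (Suc m))/(1-x)^(Suc (Suc m))) / R) (at x)"
      using x0 by (intro DERIV_cdivide DERIV_cmult DERIV_add d_inv_pow d_inv_pow1) auto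
    have eq: "fact m * ((-1)^m * (-(real (Suc m))/x^(Suc (Suc m))) + (real (Suc m))/(1-x)^(Suc (Suc m))) / R
       = fact (Suc m) * ((-1)^(Suc m) / x^(Suc (Suc m)) + 1/(1-x)^(Suc (Suc m))) / R"
      using x0 by (simp add: field_simps)
    have e1: "D n = (\<lambda>x. fact m * ((-1)^m * (1/x^(Suc m)) + 1/(1-x)^(Suc m)) / R)"
      unfolding D_def Suc by (simp add: fun_eq_iff)
    have e2: "D (Suc n) x = fact (Suc m) * ((-1)^(Suc m) / x^(Suc (Suc m)) + 1/(1-x)^(Suc (Suc m))) / R"
      unfolding D_def Suc by simp
    show ?thesis using DERIV_cong[OF der eq] unfolding e1 e2 .
  qed
  thus "(D n has_real_derivative D (Suc n) x) (at x within {a..<1})"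
    by (rule has_field_derivative_at_within)
qed

context
  fixes \<alpha> f W R :: real
  assumes a0: "0 < \<alpha>" and a1: "\<alpha> < 1" and f0: "0 < f" and W0: "0 < W" and R0: "0 < R"
begin

definition "kk J = exp (R*f) * exp (R*\<alpha>*J) - \<alpha> * exp (R*J) - (1-\<alpha>)"
definition "kd J = R*\<alpha>*(exp (R*f) * exp (R*\<alpha>*J) - exp (R*J))"

lemma kk_deriv: "(kk has_real_derivative kd J) (at J)"
  unfolding kk_def kd_def
  by (auto intro!: derivative_eq_intros simp: algebra_simps)

lemma exp_split: "exp (R*J) = exp (R*\<alpha>*J) * exp (R*(1-\<alpha>)*J)"
proof -
  have "R*J = R*\<alpha>*J + R*(1-\<alpha>)*J" by (simp add: algebra_simps)
  thus ?thesis by (metis exp_add)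
qed

lemma kd_pos: "J < f/(1-\<alpha>) \<Longrightarrow> kd J > 0"
proof -
  assume "J < f/(1-\<alpha>)"
  hence "(1-\<alpha>)*J < f" using a1 by (simp add: field_simps)
  hence "R*((1-\<alpha>)*J) < R*f" using R0 by simp
  hence "R*(1-\<alpha>)*J < R*f" by (simp add: mult.assoc)
  hence "exp (R*(1-\<alpha>)*J) < exp (R*f)" by simp
  hence "exp (R*\<alpha>*J) * exp (R*(1-\<alpha>)*J) < exp (R*f) * exp (R*\<alpha>*J)" by simp
  thus ?thesis unfolding kd_def using exp_split[of J] a0 R0 by simp
qed

lemma kd_neg: "J > f/(1-\<alpha>) \<Longrightarrow> kd J < 0"
proof -
  assume "J > f/(1-\<alpha>)"
  hence "(1-\<alpha>)*J > f" using a1 by (simp add: field_simps)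
  hence "R*((1-\<alpha>)*J) > R*f" using R0 by simp
  hence "R*(1-\<alpha>)*J > R*f" by (simp add: mult.assoc)
  hence "exp (R*(1-\<alpha>)*J) > exp (R*f)" by simp
  hence "exp (R*\<alpha>*J) * exp (R*(1-\<alpha>)*J) > exp (R*f) * exp (R*\<alpha>*J)" by simp
  thus ?thesis unfolding kd_def using exp_split[of J] a0 R0 by (simp add: mult_less_0_iff)
qed

lemma kk_inc: "a < b \<Longrightarrow> b \<le> f/(1-\<alpha>) \<Longrightarrow> kk a < kk b"
proof -
  assume ab: "a < b" "b \<le> f/(1-\<alpha>)"
  obtain z where z: "a < z" "z < b" "kk b - kk a = (b-a) * kd z"
    using MVT2[OF ab(1), of kk kd] kk_deriv by blast
  have "kd z > 0" using kd_pos z ab by simp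
  hence "(b-a) * kd z > 0" using z by simp
  thus ?thesis using z by simp
qed

lemma kk_dec: "a < b \<Longrightarrow> f/(1-\<alpha>) \<le> a \<Longrightarrow> kk a > kk b"
proof -
  assume ab: "a < b" "f/(1-\<alpha>) \<le> a"
  obtain z where z: "a < z" "z < b" "kk b - kk a = (b-a) * kd z"
    using MVT2[OF ab(1), of kk kd] kk_deriv by blast
  have "kd z < 0" using kd_neg z ab by simp
  hence "(b-a) * kd z < 0" using z by (simp add: mult_pos_neg)
  thus ?thesis using z by simp
qed

lemma kk0: "kk 0 > 0"
  unfolding kk_def using f0 R0 by simp

lemma kk_J2: "kk ((R*f - ln \<alpha>)/(R*(1-\<alpha>)) + 1) < 0"
proof -
  define J where "J = (R*f - ln \<alpha>)/(R*(1-\<alpha>)) + 1"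
  have nz: "R*(1-\<alpha>) \<noteq> 0" using a1 R0 by simp
  have "(R*(1-\<alpha>))*J = R*f - ln \<alpha> + R*(1-\<alpha>)" unfolding J_def using nz
    by (simp add: distrib_left)
  hence "R*(1-\<alpha>)*J > R*f - ln \<alpha>" using a1 R0 by simp
  hence "exp (R*(1-\<alpha>)*J) > exp (R*f - ln \<alpha>)" by simp
  also have "exp (R*f - ln \<alpha>) = exp (R*f) / \<alpha>" using a0 by (simp add: exp_diff)
  finally have "\<alpha> * exp (R*(1-\<alpha>)*J) > exp (R*f)" using a0 by (simp add: field_simps)
  hence "\<alpha> * exp (R*(1-\<alpha>)*J) * exp (R*\<alpha>*J) > exp (R*f) * exp (R*\<alpha>*J)" by simp
  hence "\<alpha> * exp (R*J) > exp (R*f) * exp (R*\<alpha>*J)" using exp_split[of J] by (simp add: algebra_simps)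
  thus ?thesis unfolding kk_def J_def[symmetric] using a1 by simp
qed

lemma kk_root: "\<exists>J. 0 < J \<and> kk J = 0 \<and> (\<forall>x. 0 \<le> x \<and> x < J \<longrightarrow> kk x > 0) \<and> (\<forall>x. J < x \<longrightarrow> kk x < 0)"
proof -
  define J1 where "J1 = f/(1-\<alpha>)"
  define J2 where "J2 = (R*f - ln \<alpha>)/(R*(1-\<alpha>)) + 1"
  have J1p: "J1 > 0" unfolding J1_def using f0 a1 by simp
  have "ln \<alpha> < 0" using a0 a1 by simp
  have "(R*f - ln \<alpha>)/(R*(1-\<alpha>)) = (R*f)/(R*(1-\<alpha>)) + (- ln \<alpha>)/(R*(1-\<alpha>))"
    by (simp add: diff_divide_distrib)
  moreover have "(R*f)/(R*(1-\<alpha>)) = f/(1-\<alpha>)" using R0 by simp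
  ultimately have "(R*f - ln \<alpha>)/(R*(1-\<alpha>)) = f/(1-\<alpha>) + (- ln \<alpha>)/(R*(1-\<alpha>))" by simp
  moreover have "(- ln \<alpha>)/(R*(1-\<alpha>)) \<ge> 0" using \<open>ln \<alpha> < 0\<close> R0 a1 by (intro divide_nonneg_pos) auto
  ultimately have "J2 > J1" unfolding J1_def J2_def by simp
  have kJ1: "kk J1 > 0" using kk_inc[of 0 J1] J1p kk0 unfolding J1_def by simp
  have "kk J2 < 0" using kk_J2 unfolding J2_def .
  have cont: "\<forall>x. J1 \<le> x \<and> x \<le> J2 \<longrightarrow> isCont kk x"
    using kk_deriv DERIV_isCont by blast
  obtain J where J: "J1 \<le> J" "J \<le> J2" "kk J = 0"
    using IVT2[of kk J2 0 J1, OF _ _ _ cont] \<open>kk J2 < 0\<close> kJ1 \<open>J2 > J1\<close> by auto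
  have "J \<noteq> J1" using kJ1 J by auto
  hence JJ1: "J > J1" using J by simp
  show ?thesis
  proof (intro exI conjI allI impI)
    show "0 < J" using JJ1 J1p by simp
    show "kk J = 0" by fact
  next
    fix x assume x: "0 \<le> x \<and> x < J"
    show "kk x > 0"
    proof (cases "x \<le> J1")
      case True
      thus ?thesis using kk_inc[of 0 x] kk0 x unfolding J1_def by (cases "x = 0") auto
    next
      case False
      thus ?thesis using kk_dec[of x J] x J unfolding J1_def by simp
    qed
  next
    fix x assume "J < x"
    thus "kk x < 0" using kk_dec[of J x] JJ1 J unfolding J1_def by simp
  qed
qed


definition "Gf p I = p*exp(-R*(1-\<alpha>)*I) + (1-p)*exp(-R*W)*exp(R*\<alpha>*I)"

lemma U_eq: "U \<alpha> f R W p I = 1 - exp(R*f) * Gf p I"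
proof -
  have e1: "exp (-R*(W - (\<alpha>*I+f))) = exp(R*f)*(exp(-R*W)*exp(R*\<alpha>*I))"
  proof -
    have "-R*(W - (\<alpha>*I+f)) = R*f + (-R*W + R*\<alpha>*I)" by (simp add: algebra_simps)
    thus ?thesis by (metis exp_add)
  qed
  have e2: "exp (-R*(I - (\<alpha>*I+f))) = exp(R*f)*exp(-R*(1-\<alpha>)*I)"
  proof -
    have "-R*(I - (\<alpha>*I+f)) = R*f + -R*(1-\<alpha>)*I" by (simp add: algebra_simps)
    thus ?thesis by (metis exp_add)
  qed
  show ?thesis unfolding U_def util_def premium_def Gf_def
    using e1 e2 by (simp add: algebra_simps)
qed

lemma U0_eq: "U0 R W p = 1 - (p + (1-p)*exp(-R*W))"
  unfolding U0_def util_def by (simp add: algebra_simps)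

lemma G_tangent:
  assumes "0 \<le> p" "p \<le> 1"
  shows "Gf p I \<ge> Gf p J + R*(I-J)*(\<alpha>*(1-p)*exp(-R*W)*exp(R*\<alpha>*J) - (1-\<alpha>)*p*exp(-R*(1-\<alpha>)*J))"
proof -
  have s1: "exp(-R*(1-\<alpha>)*I) = exp(-R*(1-\<alpha>)*J) * exp(-R*(1-\<alpha>)*(I-J))"
  proof -
    have "-R*(1-\<alpha>)*I = -R*(1-\<alpha>)*J + -R*(1-\<alpha>)*(I-J)" by (simp add: algebra_simps)
    thus ?thesis by (metis exp_add)
  qed
  have s2: "exp(R*\<alpha>*I) = exp(R*\<alpha>*J) * exp(R*\<alpha>*(I-J))"
  proof -
    have "R*\<alpha>*I = R*\<alpha>*J + R*\<alpha>*(I-J)" by (simp add: algebra_simps)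
    thus ?thesis by (metis exp_add)
  qed
  have t1: "exp(-R*(1-\<alpha>)*(I-J)) \<ge> 1 + -R*(1-\<alpha>)*(I-J)" by (rule exp_ge_add_one_self)
  have t2: "exp(R*\<alpha>*(I-J)) \<ge> 1 + R*\<alpha>*(I-J)" by (rule exp_ge_add_one_self)
  have c1: "p*exp(-R*(1-\<alpha>)*J) \<ge> 0" using assms by simp
  have c2: "(1-p)*exp(-R*W)*exp(R*\<alpha>*J) \<ge> 0" using assms by simp
  have m1: "p*exp(-R*(1-\<alpha>)*J) * exp(-R*(1-\<alpha>)*(I-J)) \<ge> p*exp(-R*(1-\<alpha>)*J) * (1 + -R*(1-\<alpha>)*(I-J))"
    using mult_left_mono[OF t1 c1] .
  have m2: "(1-p)*exp(-R*W)*exp(R*\<alpha>*J) * exp(R*\<alpha>*(I-J)) \<ge> (1-p)*exp(-R*W)*exp(R*\<alpha>*J) * (1 + R*\<alpha>*(I-J))"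
    using mult_left_mono[OF t2 c2] .
  have "Gf p I = p*exp(-R*(1-\<alpha>)*J) * exp(-R*(1-\<alpha>)*(I-J)) + (1-p)*exp(-R*W)*exp(R*\<alpha>*J) * exp(R*\<alpha>*(I-J))"
    unfolding Gf_def s1 s2 by (simp add: algebra_simps)
  also have "\<dots> \<ge> p*exp(-R*(1-\<alpha>)*J) * (1 + -R*(1-\<alpha>)*(I-J)) + (1-p)*exp(-R*W)*exp(R*\<alpha>*J) * (1 + R*\<alpha>*(I-J))"
    using m1 m2 by simp
  moreover have "p*exp(-R*(1-\<alpha>)*J) * (1 + -R*(1-\<alpha>)*(I-J)) + (1-p)*exp(-R*W)*exp(R*\<alpha>*J) * (1 + R*\<alpha>*(I-J))
     = Gf p J + R*(I-J)*(\<alpha>*(1-p)*exp(-R*W)*exp(R*\<alpha>*J) - (1-\<alpha>)*p*exp(-R*(1-\<alpha>)*J))"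
    unfolding Gf_def by (simp add: algebra_simps)
  ultimately show ?thesis by simp
qed

lemma stat:
  assumes "\<alpha>*(1-p)*exp(-R*W)*exp(R*J) = (1-\<alpha>)*p"
  shows "\<alpha>*(1-p)*exp(-R*W)*exp(R*\<alpha>*J) = (1-\<alpha>)*p*exp(-R*(1-\<alpha>)*J)"
proof -
  have "exp(R*\<alpha>*J) = exp(R*J) * exp(-R*(1-\<alpha>)*J)"
  proof -
    have "R*\<alpha>*J = R*J + -R*(1-\<alpha>)*J" by (simp add: algebra_simps)
    thus ?thesis by (metis exp_add)
  qed
  hence "\<alpha>*(1-p)*exp(-R*W)*exp(R*\<alpha>*J) = (\<alpha>*(1-p)*exp(-R*W)*exp(R*J)) * exp(-R*(1-\<alpha>)*J)"
    by (simp only: mult.assoc)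
  thus ?thesis unfolding assms by (simp only: mult.assoc)
qed

lemma U_opt:
  assumes "\<alpha>*(1-p)*exp(-R*W)*exp(R*J) = (1-\<alpha>)*p" "0 \<le> p" "p \<le> 1"
  shows "U \<alpha> f R W p I \<le> U \<alpha> f R W p J"
proof -
  have "Gf p I \<ge> Gf p J" using G_tangent[OF assms(2,3), where I=I and J=J] stat[OF assms(1)] by simp
  thus ?thesis unfolding U_eq by simp
qed

lemma U_val:
  assumes "\<alpha>*(1-p)*exp(-R*W)*exp(R*J) = (1-\<alpha>)*p"
  shows "U \<alpha> f R W p J - U0 R W p = -(1-p)*exp(-R*W)*kk J/(1-\<alpha>)"
proof -
  define E where "E = exp(-R*W)"
  have p: "p = \<alpha>*(1-p)*E*exp(R*J)/(1-\<alpha>)" using assms a1 unfolding E_def by (simp add: field_simps)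
  have st: "(1-\<alpha>)*p*exp(-R*(1-\<alpha>)*J) = \<alpha>*(1-p)*E*exp(R*\<alpha>*J)" using stat[OF assms] unfolding E_def by simp
  have "p*exp(-R*(1-\<alpha>)*J) = \<alpha>*(1-p)*E*exp(R*\<alpha>*J)/(1-\<alpha>)"
    using st a1 by (simp add: field_simps)
  hence G: "Gf p J = (1-p)*E*exp(R*\<alpha>*J)/(1-\<alpha>)"
    unfolding Gf_def E_def[symmetric] using a1 by (simp add: field_simps)
  have nz: "1 - \<alpha> \<noteq> 0" using a1 by simp
  have as: "\<alpha>*(1-p)*E*exp(R*J) = (1-\<alpha>)*p" using assms unfolding E_def .
  have "(1-\<alpha>)*(p + (1-p)*E - exp(R*f)*Gf p J) = (1-\<alpha>)*p + (1-\<alpha>)*(1-p)*E - exp(R*f)*((1-p)*E*exp(R*\<alpha>*J))"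
    unfolding G using nz by (simp add: field_simps)
  also have "\<dots> = \<alpha>*(1-p)*E*exp(R*J) + (1-\<alpha>)*(1-p)*E - exp(R*f)*((1-p)*E*exp(R*\<alpha>*J))"
    using as by simp
  also have "\<dots> = (1-\<alpha>)*(-(1-p)*E*kk J/(1-\<alpha>))"
    unfolding kk_def using nz by (simp add: field_simps)
  finally have "(1-\<alpha>)*(p + (1-p)*E - exp(R*f)*Gf p J) = (1-\<alpha>)*(-(1-p)*E*kk J/(1-\<alpha>))" .
  hence "p + (1-p)*E - exp(R*f)*Gf p J = -(1-p)*E*kk J/(1-\<alpha>)" using nz by (simp only: mult_cancel_left) simp
  thus ?thesis unfolding U_eq U0_eq E_def by simp
qed

lemma U_small:
  assumes "\<alpha>*(1-p)*exp(-R*W) \<ge> (1-\<alpha>)*p" "0 \<le> p" "p \<le> 1" "I \<ge> 0"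
  shows "U \<alpha> f R W p I \<le> U0 R W p"
proof -
  have "Gf p I \<ge> Gf p 0 + R*I*(\<alpha>*(1-p)*exp(-R*W) - (1-\<alpha>)*p)"
    using G_tangent[OF assms(2,3), where I=I and J=0] by simp
  moreover have "R*I*(\<alpha>*(1-p)*exp(-R*W) - (1-\<alpha>)*p) \<ge> 0" using assms R0 by simp
  ultimately have g: "Gf p I \<ge> p + (1-p)*exp(-R*W)" unfolding Gf_def by simp
  have h: "p + (1-p)*exp(-R*W) \<ge> 0" using assms by simp
  have A: "exp(R*f) \<ge> 1" using R0 f0 by simp
  have "exp(R*f) * Gf p I \<ge> 1 * (p + (1-p)*exp(-R*W))"
    using mult_mono[OF A g] h by simp
  thus ?thesis unfolding U_eq U0_eq by simp
qed

definition "Ih p = (ln ((1-\<alpha>)/(\<alpha>*exp(-R*W))) + ln p - ln (1-p))/R"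

lemma Ih_stat:
  assumes "0 < p" "p < 1"
  shows "\<alpha>*(1-p)*exp(-R*W)*exp(R*Ih p) = (1-\<alpha>)*p"
proof -
  have "R*Ih p = ln ((1-\<alpha>)/(\<alpha>*exp(-R*W))) + ln p - ln (1-p)"
    unfolding Ih_def using R0 by simp
  hence "exp(R*Ih p) = exp (ln ((1-\<alpha>)/(\<alpha>*exp(-R*W)))) * exp (ln p) / exp (ln (1-p))"
    by (simp only: exp_add exp_diff)
  also have "\<dots> = (1-\<alpha>)/(\<alpha>*exp(-R*W)) * p / (1-p)"
    using assms a0 a1 by simp
  finally have e: "exp(R*Ih p) = (1-\<alpha>)/(\<alpha>*exp(-R*W)) * p / (1-p)" .
  have "\<alpha>*(1-p)*exp(-R*W) \<noteq> 0" using assms a0 by simp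
  thus ?thesis unfolding e using assms a0 a1 by (simp add: field_simps)
qed

lemma Ih_mono:
  assumes "0 < p" "p < q" "q < 1"
  shows "Ih p < Ih q"
proof -
  have "ln p < ln q" using assms by simp
  moreover have "ln (1-q) < ln (1-p)" using assms by simp
  ultimately show ?thesis unfolding Ih_def using R0 by (simp add: divide_strict_right_mono)
qed


lemma main: "\<exists>pstar Ihat. 0 < pstar \<and> pstar < 1 \<and>
     smooth_on {pstar..<1} Ihat \<and>
     (\<forall>p\<in>{pstar..<1}. 0 < Ihat p) \<and>
     (\<forall>p\<in>{0<..<pstar}. \<forall>I\<ge>0. U \<alpha> f R W p I \<le> U0 R W p) \<and>
     ((\<forall>I\<ge>0. U \<alpha> f R W pstar I \<le> U \<alpha> f R W pstar (Ihat pstar)) \<and>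
      U0 R W pstar = U \<alpha> f R W pstar (Ihat pstar) \<and> 0 < Ihat pstar) \<and>
     (\<forall>p\<in>{pstar<..<1}.
        (\<forall>I\<ge>0. U \<alpha> f R W p I \<le> U \<alpha> f R W p (Ihat p)) \<and>
        U \<alpha> f R W p (Ihat p) > U0 R W p \<and> 0 < Ihat p)"
proof -
  obtain J where J: "0<J" "kk J = 0" "\<And>x. 0\<le>x \<Longrightarrow> x<J \<Longrightarrow> kk x > 0" "\<And>x. J<x \<Longrightarrow> kk x < 0"
    using kk_root by blast
  define E where "E = exp(-R*W)"
  have E0: "E > 0" unfolding E_def by simp
  define sv where "sv = \<alpha>*E*exp(R*J)/(1-\<alpha>)"
  have s0: "sv > 0" using a0 a1 E0 unfolding sv_def by simp
  define ps where "ps = sv/(1+sv)"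
  have ps: "0 < ps" "ps < 1" using s0 unfolding ps_def by (auto simp: field_simps)
  have sJ: "\<alpha>*E*exp(R*J) = (1-\<alpha>) * sv" unfolding sv_def using a1 by simp
  have ps1: "(1-ps) * sv = ps" unfolding ps_def using s0 by (simp add: field_simps)
  have "\<alpha>*(1-ps)*E*exp(R*J) = (1-ps)*(\<alpha>*E*exp(R*J))" by (simp add: algebra_simps)
  also have "\<dots> = (1-\<alpha>)*((1-ps) * sv)" unfolding sJ by (simp add: algebra_simps)
  finally have statJ: "\<alpha>*(1-ps)*E*exp(R*J) = (1-\<alpha>)*ps" unfolding ps1 .
  have "\<alpha>*(1-ps)*E*exp(R*Ih ps) = \<alpha>*(1-ps)*E*exp(R*J)"
    using Ih_stat[OF ps] statJ unfolding E_def by simp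
  moreover have "\<alpha>*(1-ps)*E \<noteq> 0" using a0 ps E0 by simp
  ultimately have "exp(R*Ih ps) = exp(R*J)" by simp
  hence IhJ: "Ih ps = J" using R0 by simp
  have neg: "U \<alpha> f R W p (Ih p) < U0 R W p" if "0 < p" "p < 1" "kk (Ih p) > 0" for p
  proof -
    have "(1-p)*E*kk (Ih p)/(1-\<alpha>) > 0" using that E0 a1 by simp
    moreover have "U \<alpha> f R W p (Ih p) - U0 R W p = -((1-p)*E*kk (Ih p)/(1-\<alpha>))"
      using U_val[OF Ih_stat[OF that(1,2)]] unfolding E_def[symmetric] by (simp only: mult_minus_left minus_divide_left)
    ultimately show ?thesis by linarith
  qed
  have pos: "U \<alpha> f R W p (Ih p) > U0 R W p" if "0 < p" "p < 1" "kk (Ih p) < 0" for p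
  proof -
    have "(1-p)*E*kk (Ih p)/(1-\<alpha>) < 0" using that E0 a1
      by (intro divide_neg_pos mult_pos_neg) auto
    moreover have "U \<alpha> f R W p (Ih p) - U0 R W p = -((1-p)*E*kk (Ih p)/(1-\<alpha>))"
      using U_val[OF Ih_stat[OF that(1,2)]] unfolding E_def[symmetric] by (simp only: mult_minus_left minus_divide_left)
    ultimately show ?thesis by linarith
  qed
  have opt: "U \<alpha> f R W p I \<le> U \<alpha> f R W p (Ih p)" if "0 < p" "p < 1" for p I :: real
    using U_opt[OF Ih_stat[OF that]] that by simp
  have Ihfun: "Ih = (\<lambda>p. (ln ((1-\<alpha>)/(\<alpha>*exp(-R*W))) + ln p - ln (1-p))/R)"
    by (simp add: fun_eq_iff Ih_def)
  show ?thesis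
  proof (intro exI[of _ ps] exI[of _ Ih] conjI ballI allI impI)
    show "0 < ps" "ps < 1" by (fact ps)+
    show "smooth_on {ps..<1} Ih" unfolding Ihfun by (rule smooth_Ihat[OF ps(1) R0])
  next
    fix p assume p: "p \<in> {ps..<1}"
    show "0 < Ih p"
    proof (cases "p = ps")
      case True thus ?thesis using IhJ J by simp
    next
      case False thus ?thesis using Ih_mono[of ps p] p ps IhJ J by simp
    qed
  next
    fix p I :: real assume p: "p \<in> {0<..<ps}" and I: "0 \<le> I"
    show "U \<alpha> f R W p I \<le> U0 R W p"
    proof (cases "\<alpha>*(1-p)*exp(-R*W) \<ge> (1-\<alpha>)*p")
      case True thus ?thesis using U_small[OF True _ _ I] p ps by simp
    next
      case False
      have p01: "0 < p" "p < 1" using p ps by auto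
      have "\<alpha>*(1-p)*E*exp(R*Ih p) > \<alpha>*(1-p)*E * 1"
        using Ih_stat[OF p01] False unfolding E_def by simp
      moreover have "\<alpha>*(1-p)*E > 0" using a0 E0 p01 by simp
      ultimately have "exp(R*Ih p) > 1" using mult_less_cancel_left_pos[of "\<alpha>*(1-p)*E" 1 "exp(R*Ih p)"] by linarith
      hence "R*Ih p > 0" by simp
      hence "Ih p > 0" using R0 by (simp add: zero_less_mult_iff)
      moreover have "Ih p < J" using Ih_mono[of p ps] p01 p ps IhJ by simp
      ultimately have "kk (Ih p) > 0" using J(3) by simp
      thus ?thesis using neg[OF p01] opt[OF p01, of I] by simp
    qed
  next
    fix I :: real assume "0 \<le> I"
    show "U \<alpha> f R W ps I \<le> U \<alpha> f R W ps (Ih ps)" using opt[OF ps] .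
  next
    show "U0 R W ps = U \<alpha> f R W ps (Ih ps)"
      using U_val[OF Ih_stat[OF ps]] IhJ J(2) by simp
    show "0 < Ih ps" using IhJ J by simp
  next
    fix p I assume p: "p \<in> {ps<..<1}" "0 \<le> (I::real)"
    have p01: "0 < p" "p < 1" using p ps by auto
    show "U \<alpha> f R W p I \<le> U \<alpha> f R W p (Ih p)" using opt[OF p01] .
  next
    fix p assume p: "p \<in> {ps<..<1}"
    have p01: "0 < p" "p < 1" using p ps by auto
    have "Ih p > J" using Ih_mono[of ps p] p ps IhJ by simp
    hence "kk (Ih p) < 0" using J(4) by simp
    thus "U \<alpha> f R W p (Ih p) > U0 R W p" using pos[OF p01] by simp
    show "0 < Ih p" using \<open>Ih p > J\<close> J by simp
  qed
qed

end
theorem proposition4p1: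
  fixes \<alpha> f W R :: real
  assumes "0 < \<alpha>" and "\<alpha> < 1" and "0 < f" and "0 < W" and "0 < R"
  shows "\<exists>pstar Ihat. 0 < pstar \<and> pstar < 1 \<and>
     smooth_on {pstar..<1} Ihat \<and>
     (\<forall>p\<in>{pstar..<1}. 0 < Ihat p) \<and>
     (\<forall>p\<in>{0<..<pstar}. \<forall>I\<ge>0. U \<alpha> f R W p I \<le> U0 R W p) \<and>
     ((\<forall>I\<ge>0. U \<alpha> f R W pstar I \<le> U \<alpha> f R W pstar (Ihat pstar)) \<and>
      U0 R W pstar = U \<alpha> f R W pstar (Ihat pstar) \<and> 0 < Ihat pstar) \<and>
     (\<forall>p\<in>{pstar<..<1}.
        (\<forall>I\<ge>0. U \<alpha> f R W p I \<le> U \<alpha> f R W p (Ihat p)) \<and>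
        U \<alpha> f R W p (Ihat p) > U0 R W p \<and> 0 < Ihat p)"
  using main[OF assms] .

end
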